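(* Let $n \ge 3$ be an integer and let $I$ be a degree-based topological index with coefficients $c_{12},c_{13},c_{22},c_{23},c_{33}$. Define $c'_{12} = c_{12}-4c_{22}+3c_{23}$, $c'_{13} = c_{13}-3c_{22}+2c_{23}$, $c'_{33} = c_{22}-2c_{23}+c_{33}$. If $c'_{13}<c'_{12}<-c'_{33}<0$, then the path $P_n$ on $n$ vertices is, up to isomorphism, the only tree in $\mathcal{G}_3(n,n-1)$ that maximizes $I$.
   Context: For integers $n,m$, $\mathcal{G}_3(n,m)$ denotes the set of simple connected undirected graphs (chemical graphs) with $n$ vertices, $m$ edges and maximum degree at most $3$; in particular $\mathcal{G}_3(n,n-1)$ is the set of trees of order $n$ with maximum degree at most $3$. For a graph $G$ and $1\le i\le j$, an $ij$-edge is an edge whose endpoints have degrees $i$ and $j$, and $m_{ij}$ denotes the number of $ij$-edges of $G$. A degree-based topological index $I$ is a function on chemical graphs of order $n\ge 3$ of the form $I(G)=c_{12}m_{12}+c_{13}m_{13}+c_{22}m_{22}+c_{23}m_{23}+c_{33}m_{33}$, where the $c_{ij}$ are fixed real numbers. *)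

theory Defs
  imports Complex_Main
begin

definition simple_graph :: "'a set \<Rightarrow> 'a set set \<Rightarrow> bool" where
  "simple_graph V E \<longleftrightarrow> finite V \<and> (\<forall>e\<in>E. \<exists>u v. u \<in> V \<and> v \<in> V \<and> u \<noteq> v \<and> e = {u, v})"

definition degree :: "'a set set \<Rightarrow> 'a \<Rightarrow> nat" where
  "degree E v = card {e \<in> E. v \<in> e}"

definition connected_graph :: "'a set \<Rightarrow> 'a set set \<Rightarrow> bool" where
  "connected_graph V E \<longleftrightarrow> (\<forall>u\<in>V. \<forall>v\<in>V. (u, v) \<in> {(x, y). {x, y} \<in> E}\<^sup>*)"

definition chem_graph :: "nat \<Rightarrow> nat \<Rightarrow> 'a set \<Rightarrow> 'a set set \<Rightarrow> bool" where
  "chem_graph n m V E \<longleftrightarrow> simple_graph V E \<and> connected_graph V E \<and> card V = n \<and> card E = m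
     \<and> (\<forall>v\<in>V. degree E v \<le> 3)"

definition m_edges :: "nat \<Rightarrow> nat \<Rightarrow> 'a set set \<Rightarrow> nat" where
  "m_edges i j E = card {e \<in> E. \<exists>u v. u \<noteq> v \<and> e = {u, v} \<and> {degree E u, degree E v} = {i, j}}"

definition top_index :: "real \<Rightarrow> real \<Rightarrow> real \<Rightarrow> real \<Rightarrow> real \<Rightarrow> 'a set set \<Rightarrow> real" where
  "top_index c12 c13 c22 c23 c33 E =
     c12 * real (m_edges 1 2 E) + c13 * real (m_edges 1 3 E) + c22 * real (m_edges 2 2 E)
     + c23 * real (m_edges 2 3 E) + c33 * real (m_edges 3 3 E)"

definition graph_iso :: "'a set \<Rightarrow> 'a set set \<Rightarrow> 'b set \<Rightarrow> 'b set set \<Rightarrow> bool" where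
  "graph_iso V1 E1 V2 E2 \<longleftrightarrow> (\<exists>f. bij_betw f V1 V2 \<and>
      (\<forall>u\<in>V1. \<forall>v\<in>V1. {u, v} \<in> E1 \<longleftrightarrow> {f u, f v} \<in> E2))"

definition path_V :: "nat \<Rightarrow> nat set" where
  "path_V n = {0..<n}"

definition path_E :: "nat \<Rightarrow> nat set set" where
  "path_E n = {{i, Suc i} | i. Suc i < n}"

end

theory Submission
  imports Defs
begin


lemma sg_edge: "simple_graph V E \<Longrightarrow> e \<in> E \<Longrightarrow> \<exists>u v. u\<in>V \<and> v\<in>V \<and> u\<noteq>v \<and> e={u,v}"
  by (simp add: simple_graph_def)

lemma sg_finE: "simple_graph V E \<Longrightarrow> finite E"
proof -
  assume a: "simple_graph V E"
  have "E \<subseteq> Pow V" using a by (auto simp: simple_graph_def)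
  moreover have "finite V" using a by (simp add: simple_graph_def)
  ultimately show ?thesis by (meson finite_Pow_iff finite_subset)
qed

lemma sg_finV: "simple_graph V E \<Longrightarrow> finite V"
  by (simp add: simple_graph_def)

lemma sg_adj: "simple_graph V E \<Longrightarrow> {x,y} \<in> E \<Longrightarrow> x\<in>V \<and> y\<in>V \<and> x\<noteq>y"
  unfolding simple_graph_def by (metis doubleton_eq_iff insert_absorb2)

definition adjR :: "'a set set \<Rightarrow> ('a \<times> 'a) set" where
  "adjR E = {(x, y). {x, y} \<in> E}"

lemma adjR_iff: "(x,y) \<in> adjR E \<longleftrightarrow> {x,y} \<in> E"
  by (simp add: adjR_def)

lemma conn_adj: "connected_graph V E \<Longrightarrow> u \<in> V \<Longrightarrow> v \<in> V \<Longrightarrow> (u,v) \<in> (adjR E)\<^sup>*"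
  unfolding connected_graph_def adjR_def by blast

definition gdist :: "'a set set \<Rightarrow> 'a set \<Rightarrow> 'a \<Rightarrow> nat" where
  "gdist E S v = (LEAST k. \<exists>s\<in>S. (s,v) \<in> adjR E ^^ k)"

lemma gdist_ex: "s \<in> S \<Longrightarrow> (s,v) \<in> adjR E ^^ k \<Longrightarrow>
   \<exists>s'\<in>S. (s',v) \<in> adjR E ^^ gdist E S v"
  unfolding gdist_def by (rule LeastI_ex) (rule exI[of _ k], rule bexI)

lemma gdist_le: "s \<in> S \<Longrightarrow> (s,v) \<in> adjR E ^^ k \<Longrightarrow> gdist E S v \<le> k"
  unfolding gdist_def by (rule Least_le) (rule bexI)

lemma gdist_zero: "s \<in> S \<Longrightarrow> gdist E S s = 0"
proof -
  assume s: "s \<in> S"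
  have "(s,s) \<in> adjR E ^^ 0" by simp
  from gdist_le[OF s this] show ?thesis by simp
qed

lemma gdist_reach: "connected_graph V E \<Longrightarrow> S \<subseteq> V \<Longrightarrow> S \<noteq> {} \<Longrightarrow> v \<in> V \<Longrightarrow>
   \<exists>s'\<in>S. (s',v) \<in> adjR E ^^ gdist E S v"
proof -
  assume c: "connected_graph V E" and S: "S \<subseteq> V" "S \<noteq> {}" and v: "v \<in> V"
  obtain s where s: "s \<in> S" using S by blast
  then have sV: "s \<in> V" using S by blast
  have "(s,v) \<in> (adjR E)\<^sup>*" by (rule conn_adj[OF c sV v])
  then obtain k where k: "(s,v) \<in> adjR E ^^ k" by (blast dest: rtrancl_imp_relpow)
  show ?thesis by (rule gdist_ex[OF s k])
qed

lemma gdist_nz: "connected_graph V E \<Longrightarrow> S \<subseteq> V \<Longrightarrow> S \<noteq> {} \<Longrightarrow> v \<in> V \<Longrightarrow> gdist E S v = 0 \<Longrightarrow> v \<in> S"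
proof -
  assume a: "connected_graph V E" "S \<subseteq> V" "S \<noteq> {}" "v \<in> V" "gdist E S v = 0"
  obtain s where "s \<in> S" "(s,v) \<in> adjR E ^^ gdist E S v" using gdist_reach[OF a(1-4)] by blast
  then show ?thesis using a(5) by simp
qed

lemma gdist_step: "connected_graph V E \<Longrightarrow> S \<subseteq> V \<Longrightarrow> S \<noteq> {} \<Longrightarrow> u \<in> V \<Longrightarrow> {u,v} \<in> E \<Longrightarrow>
   gdist E S v \<le> Suc (gdist E S u)"
proof -
  assume a: "connected_graph V E" "S \<subseteq> V" "S \<noteq> {}" "u \<in> V" "{u,v} \<in> E"
  obtain s where s: "s \<in> S" "(s,u) \<in> adjR E ^^ gdist E S u" using gdist_reach[OF a(1-4)] by blast
  have "(u,v) \<in> adjR E" using a(5) by (simp add: adjR_iff)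
  with s(2) have "(s,v) \<in> adjR E ^^ Suc (gdist E S u)" by (rule relpow_Suc_I)
  then show ?thesis by (rule gdist_le[OF s(1)])
qed

lemma gdist_parent: "connected_graph V E \<Longrightarrow> S \<subseteq> V \<Longrightarrow> S \<noteq> {} \<Longrightarrow> v \<in> V \<Longrightarrow> v \<notin> S \<Longrightarrow>
   \<exists>w. {w,v} \<in> E \<and> Suc (gdist E S w) = gdist E S v"
proof -
  assume a: "connected_graph V E" "S \<subseteq> V" "S \<noteq> {}" "v \<in> V" "v \<notin> S"
  obtain s where s: "s \<in> S" "(s,v) \<in> adjR E ^^ gdist E S v" using gdist_reach[OF a(1-4)] by blast
  have "gdist E S v \<noteq> 0"
  proof
    assume "gdist E S v = 0"
    then show False using s a(5) by simp
  qed
  then obtain j where j: "gdist E S v = Suc j" using not0_implies_Suc by blast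
  have "(s,v) \<in> adjR E ^^ Suc j" using s(2) j by simp
  then obtain y where y: "(s,y) \<in> adjR E ^^ j" "(y,v) \<in> adjR E"
    by (rule relpow_Suc_E)
  have le1: "gdist E S y \<le> j" by (rule gdist_le[OF s(1) y(1)])
  obtain s' where s': "s' \<in> S" "(s',y) \<in> adjR E ^^ gdist E S y"
    using gdist_ex[OF s(1) y(1)] by blast
  from s'(2) y(2) have "(s',v) \<in> adjR E ^^ Suc (gdist E S y)" by (rule relpow_Suc_I)
  then have "gdist E S v \<le> Suc (gdist E S y)" by (rule gdist_le[OF s'(1)])
  then have "Suc (gdist E S y) = gdist E S v" using j le1 by simp
  then show ?thesis using y(2) by (auto simp: adjR_iff)
qed

lemma conn_edges_out:
  assumes sg: "simple_graph V E" and c: "connected_graph V E" and S: "S \<subseteq> V" "S \<noteq> {}"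
  shows "card (V - S) \<le> card {e\<in>E. \<not> e \<subseteq> S}"
proof -
  define p where "p v = (SOME w. {w,v} \<in> E \<and> Suc (gdist E S w) = gdist E S v)" for v
  have p: "{p v, v} \<in> E \<and> Suc (gdist E S (p v)) = gdist E S v" if "v \<in> V - S" for v
    unfolding p_def by (rule someI_ex) (use gdist_parent[OF c S] that in blast)
  have inj: "inj_on (\<lambda>v. {v, p v}) (V - S)"
  proof (rule inj_onI)
    fix v v' assume vv: "v \<in> V - S" "v' \<in> V - S" "{v, p v} = {v', p v'}"
    show "v = v'"
    proof (rule ccontr)
      assume "v \<noteq> v'"
      then have "v = p v'" "v' = p v" using vv(3) by (auto simp: doubleton_eq_iff)
      then show False using p[OF vv(1)] p[OF vv(2)] by simp
    qed
  qed
  have "(\<lambda>v. {v, p v}) ` (V - S) \<subseteq> {e\<in>E. \<not> e \<subseteq> S}"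
    using p by (auto simp: insert_commute)
  moreover have "finite {e\<in>E. \<not> e \<subseteq> S}" using sg_finE[OF sg] by simp
  ultimately show ?thesis using card_inj_on_le[OF inj] by blast
qed

lemma tree_forest:
  assumes sg: "simple_graph V E" and c: "connected_graph V E" and S: "S \<subseteq> V" "S \<noteq> {}"
    and m: "card E = card V - 1"
  shows "card {e\<in>E. e \<subseteq> S} \<le> card S - 1"
proof -
  have fE: "finite E" using sg_finE[OF sg] .
  have fV: "finite V" using sg_finV[OF sg] .
  have "card E = card {e\<in>E. e \<subseteq> S} + card {e\<in>E. \<not> e \<subseteq> S}"
  proof -
    have "E = {e\<in>E. e \<subseteq> S} \<union> {e\<in>E. \<not> e \<subseteq> S}" by blast
    moreover have "card ({e\<in>E. e \<subseteq> S} \<union> {e\<in>E. \<not> e \<subseteq> S}) = card {e\<in>E. e \<subseteq> S} + card {e\<in>E. \<not> e \<subseteq> S}"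
      by (rule card_Un_disjoint) (use fE in auto)
    ultimately show ?thesis by simp
  qed
  moreover have "card (V - S) = card V - card S" using S fV by (meson card_Diff_subset finite_subset)
  moreover have "card S \<ge> 1" using S fV by (metis One_nat_def Suc_leI card_gt_0_iff finite_subset)
  moreover have "card S \<le> card V" using S fV by (simp add: card_mono)
  ultimately show ?thesis using conn_edges_out[OF sg c S] m by linarith
qed




lemma deg_pos:
  assumes sg: "simple_graph V E" and c: "connected_graph V E" and V: "card V \<ge> 2" and v: "v \<in> V"
  shows "degree E v \<ge> 1"
proof -
  have fV: "finite V" using sg_finV[OF sg] .
  obtain w where w: "w \<in> V" "w \<noteq> v"
  proof -
    have "\<not> V \<subseteq> {v}"
    proof
      assume "V \<subseteq> {v}"
      then have "card V \<le> card {v}" by (intro card_mono) simp_all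
      then show False using V by simp
    qed
    then show ?thesis using that by blast
  qed
  have "(v,w) \<in> (adjR E)\<^sup>*" by (rule conn_adj[OF c v w(1)])
  then obtain y where "(v,y) \<in> adjR E" using w(2) by (cases rule: converse_rtranclE) auto
  then have "{v,y} \<in> E" by (simp add: adjR_iff)
  then have "{e\<in>E. v \<in> e} \<noteq> {}" by blast
  moreover have "finite {e\<in>E. v \<in> e}" using sg_finE[OF sg] by simp
  ultimately show ?thesis unfolding degree_def by (simp add: Suc_leI card_gt_0_iff)
qed

lemma deg1_unique:
  assumes "degree E u = 1" "{u,v} \<in> E"
  shows "{e\<in>E. u \<in> e} = {{u,v}}"
proof -
  obtain x where x: "{e\<in>E. u \<in> e} = {x}" using assms(1) unfolding degree_def by (meson card_1_singletonE)
  have "{u,v} \<in> {e\<in>E. u \<in> e}" using assms(2) by simp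
  then show ?thesis using x by auto
qed

lemma no_11:
  assumes sg: "simple_graph V E" and c: "connected_graph V E" and V: "card V \<ge> 3"
    and e: "{u,v} \<in> E" and du: "degree E u = 1" and dv: "degree E v = 1"
  shows False
proof -
  have Eu: "{e\<in>E. u \<in> e} = {{u,v}}" using deg1_unique[OF du e] .
  have Ev: "{e\<in>E. v \<in> e} = {{u,v}}" using deg1_unique[OF dv] e by (simp add: insert_commute)
  have uV: "u \<in> V" using sg_adj[OF sg e] by simp
  have cl: "x \<in> {u,v}" if "(u,x) \<in> (adjR E)\<^sup>*" for x
    using that
  proof (induction rule: rtrancl_induct)
    case base then show ?case by simp
  next
    case (step y z)
    then have yz: "{y,z} \<in> E" by (simp add: adjR_iff)
    show ?case
    proof (cases "y = u")
      case True
      then have "{y,z} \<in> {e\<in>E. u \<in> e}" using yz by simp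
      then have "{y,z} = {u,v}" using Eu by simp
      then show ?thesis by (metis insertCI doubleton_eq_iff)
    next
      case False
      then have "y = v" using step by simp
      then have "{y,z} \<in> {e\<in>E. v \<in> e}" using yz by simp
      then have "{y,z} = {u,v}" using Ev by simp
      then show ?thesis by (metis insertCI doubleton_eq_iff)
    qed
  qed
  have "V \<subseteq> {u,v}"
  proof
    fix x assume "x \<in> V"
    then show "x \<in> {u,v}" by (rule cl[OF conn_adj[OF c uV]])
  qed
  then have "card V \<le> card {u,v}" by (simp add: card_mono)
  also have "\<dots> \<le> 2" by (simp add: card_insert_if)
  finally show False using V by simp
qed

lemma sum_ind: "finite A \<Longrightarrow> (\<Sum>x\<in>A. if P x then 1 else 0 :: nat) = card {x\<in>A. P x}"
  by (simp add: sum.If_cases Int_def)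

lemma incid:
  assumes sg: "simple_graph V E"
  shows "(\<Sum>e\<in>E. card {x\<in>e. P x}) = (\<Sum>v\<in>{v\<in>V. P v}. degree E v)"
proof -
  have fE: "finite E" using sg_finE[OF sg] .
  have fV: "finite V" using sg_finV[OF sg] .
  have eV: "e \<subseteq> V" if e: "e \<in> E" for e
  proof -
    obtain u v where "u \<in> V" "v \<in> V" "e = {u,v}" using sg_edge[OF sg e] by blast
    then show ?thesis by simp
  qed
  have "(\<Sum>v\<in>{v\<in>V. P v}. degree E v) = (\<Sum>v\<in>{v\<in>V. P v}. \<Sum>e\<in>E. if v \<in> e then 1 else 0)"
    unfolding degree_def using fE by (simp add: sum_ind)
  also have "\<dots> = (\<Sum>e\<in>E. \<Sum>v\<in>{v\<in>V. P v}. if v \<in> e then 1 else 0)" by (rule sum.swap)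
  also have "\<dots> = (\<Sum>e\<in>E. card {x\<in>e. P x})"
  proof (rule sum.cong)
    fix e assume "e \<in> E"
    then have "{v\<in>{v\<in>V. P v}. v \<in> e} = {x\<in>e. P x}" using eV by blast
    then show "(\<Sum>v\<in>{v\<in>V. P v}. if v \<in> e then 1 else 0) = card {x\<in>e. P x}"
      using fV by (simp add: sum_ind)
  qed simp
  finally show ?thesis by simp
qed

definition etyp :: "'a set set \<Rightarrow> nat \<Rightarrow> nat \<Rightarrow> 'a set \<Rightarrow> bool" where
  "etyp E i j e \<longleftrightarrow> (\<exists>u v. u \<noteq> v \<and> e = {u,v} \<and> {degree E u, degree E v} = {i,j})"

lemma m_edges_alt: "m_edges i j E = card {e\<in>E. etyp E i j e}"
  by (simp add: m_edges_def etyp_def)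

lemma etyp_iff: "u \<noteq> v \<Longrightarrow> etyp E i j {u,v} \<longleftrightarrow> {degree E u, degree E v} = {i,j}"
  unfolding etyp_def
  by (smt (verit, ccfv_threshold) doubleton_eq_iff)

lemma card2P: "u \<noteq> v \<Longrightarrow> card {x\<in>{u,v}. P x} = (if P u then 1 else 0) + (if P v then 1 else 0)"
proof -
  assume uv: "u \<noteq> v"
  have "{x\<in>{u,v}. P x} = (if P u then {u} else {}) \<union> (if P v then {v} else {})" by auto
  then show ?thesis using uv by (cases "P u"; cases "P v") simp_all
qed




lemma pe:
  assumes "u \<noteq> v" "degree E u \<in> {1,2,3}" "degree E v \<in> {1,2,3}" "\<not>(degree E u = 1 \<and> degree E v = 1)"
  shows "card {x\<in>{u,v}. degree E x = 1} = (if etyp E 1 2 {u,v} then 1 else 0) + (if etyp E 1 3 {u,v} then 1 else 0)"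
    "card {x\<in>{u,v}. degree E x = 2} = (if etyp E 1 2 {u,v} then 1 else 0) + (if etyp E 2 2 {u,v} then 1 else 0)
       + (if etyp E 2 2 {u,v} then 1 else 0) + (if etyp E 2 3 {u,v} then 1 else 0)"
    "card {x\<in>{u,v}. degree E x = 3} = (if etyp E 1 3 {u,v} then 1 else 0) + (if etyp E 2 3 {u,v} then 1 else 0)
       + (if etyp E 3 3 {u,v} then 1 else 0) + (if etyp E 3 3 {u,v} then 1 else 0)"
    "(1::nat) = (if etyp E 1 2 {u,v} then 1 else 0) + (if etyp E 1 3 {u,v} then 1 else 0)
       + (if etyp E 2 2 {u,v} then 1 else 0) + (if etyp E 2 3 {u,v} then 1 else 0) + (if etyp E 3 3 {u,v} then 1 else 0)"
  unfolding card2P[OF assms(1)] using assms by (auto simp: etyp_iff doubleton_eq_iff)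

lemma edge_facts:
  assumes cg: "chem_graph n (n-1) V E" and n: "n \<ge> 3" and e: "e \<in> E"
  shows "\<exists>u v. u \<noteq> v \<and> e = {u,v} \<and> degree E u \<in> {1,2,3} \<and> degree E v \<in> {1,2,3}
     \<and> \<not>(degree E u = 1 \<and> degree E v = 1)"
proof -
  have sg: "simple_graph V E" and c: "connected_graph V E" and cV: "card V = n"
    and d3: "\<forall>v\<in>V. degree E v \<le> 3" using cg unfolding chem_graph_def by auto
  obtain u v where uv: "u \<in> V" "v \<in> V" "u \<noteq> v" "e = {u,v}" using sg_edge[OF sg e] by blast
  have g1: "degree E u \<ge> 1" "degree E v \<ge> 1" using deg_pos[OF sg c] uv cV n by auto
  have g3: "degree E u \<le> 3" "degree E v \<le> 3" using d3 uv by auto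
  have du: "degree E u \<in> {1,2,3}" using g1(1) g3(1) by (simp add: eval_nat_numeral le_Suc_eq)
  have dv: "degree E v \<in> {1,2,3}" using g1(2) g3(2) by (simp add: eval_nat_numeral le_Suc_eq)
  have n11: "\<not>(degree E u = 1 \<and> degree E v = 1)"
  proof -
    have e2: "{u,v} \<in> E" using e uv by simp
    have c3: "card V \<ge> 3" using cV n by simp
    show ?thesis using no_11[OF sg c c3 e2] by blast
  qed
  show ?thesis using uv(3) uv(4) du dv n11 by (intro exI[of _ u] exI[of _ v] conjI) simp_all
qed

lemma vert_facts:
  assumes cg: "chem_graph n (n-1) V E" and n: "n \<ge> 3" and v: "v \<in> V"
  shows "degree E v = 1 \<or> degree E v = 2 \<or> degree E v = 3"
proof -
  have sg: "simple_graph V E" and c: "connected_graph V E" and cV: "card V = n"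
    and d3: "\<forall>v\<in>V. degree E v \<le> 3" using cg unfolding chem_graph_def by auto
  have "degree E v \<ge> 1" using deg_pos[OF sg c] v cV n by auto
  then show ?thesis using d3 v by auto
qed

lemma tree_counts:
  assumes cg: "chem_graph n (n-1) V E" and n: "n \<ge> 3"
  shows "card {v\<in>V. degree E v = 1} = m_edges 1 2 E + m_edges 1 3 E"
    "2 * card {v\<in>V. degree E v = 2} = m_edges 1 2 E + 2 * m_edges 2 2 E + m_edges 2 3 E"
    "3 * card {v\<in>V. degree E v = 3} = m_edges 1 3 E + m_edges 2 3 E + 2 * m_edges 3 3 E"
    "n = card {v\<in>V. degree E v = 1} + card {v\<in>V. degree E v = 2} + card {v\<in>V. degree E v = 3}"
    "n - 1 = m_edges 1 2 E + m_edges 1 3 E + m_edges 2 2 E + m_edges 2 3 E + m_edges 3 3 E"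
proof -
  have sg: "simple_graph V E" and c: "connected_graph V E" and cV: "card V = n" and cE: "card E = n - 1"
    using cg unfolding chem_graph_def by auto
  have fE: "finite E" using sg_finE[OF sg] .
  have fV: "finite V" using sg_finV[OF sg] .
  define I where "I i j e = (if etyp E i j e then 1 else (0::nat))" for i j e
  have sI: "(\<Sum>e\<in>E. I i j e) = m_edges i j E" for i j
    unfolding I_def m_edges_alt using sum_ind[OF fE] by blast
  have dsum: "d * card {v\<in>V. degree E v = d} = (\<Sum>e\<in>E. card {x\<in>e. degree E x = d})" for d
  proof -
    have "(\<Sum>v\<in>{v\<in>V. degree E v = d}. degree E v) = (\<Sum>v\<in>{v\<in>V. degree E v = d}. d)"
      by (rule sum.cong) auto
    then show ?thesis using incid[OF sg, of "\<lambda>x. degree E x = d"] by simp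
  qed
  have pe': "card {x\<in>e. degree E x = 1} = I 1 2 e + I 1 3 e \<and>
     card {x\<in>e. degree E x = 2} = I 1 2 e + I 2 2 e + I 2 2 e + I 2 3 e \<and>
     card {x\<in>e. degree E x = 3} = I 1 3 e + I 2 3 e + I 3 3 e + I 3 3 e \<and>
     1 = I 1 2 e + I 1 3 e + I 2 2 e + I 2 3 e + I 3 3 e" if eE: "e \<in> E" for e
  proof -
    obtain u v where h: "u \<noteq> v" "e = {u,v}" "degree E u \<in> {1,2,3}" "degree E v \<in> {1,2,3}"
      "\<not>(degree E u = 1 \<and> degree E v = 1)" using edge_facts[OF cg n eE] by blast
    show ?thesis unfolding I_def h(2) using pe[OF h(1) h(3) h(4) h(5)] by simp
  qed
  have "1 * card {v\<in>V. degree E v = 1} = (\<Sum>e\<in>E. I 1 2 e + I 1 3 e)"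
    unfolding dsum using pe' by (intro sum.cong) auto
  then show "card {v\<in>V. degree E v = 1} = m_edges 1 2 E + m_edges 1 3 E"
    by (simp add: sum.distrib sI)
  have "2 * card {v\<in>V. degree E v = 2} = (\<Sum>e\<in>E. I 1 2 e + I 2 2 e + I 2 2 e + I 2 3 e)"
    unfolding dsum using pe' by (intro sum.cong) auto
  then show "2 * card {v\<in>V. degree E v = 2} = m_edges 1 2 E + 2 * m_edges 2 2 E + m_edges 2 3 E"
    by (simp add: sum.distrib sI)
  have "3 * card {v\<in>V. degree E v = 3} = (\<Sum>e\<in>E. I 1 3 e + I 2 3 e + I 3 3 e + I 3 3 e)"
    unfolding dsum using pe' by (intro sum.cong) auto
  then show "3 * card {v\<in>V. degree E v = 3} = m_edges 1 3 E + m_edges 2 3 E + 2 * m_edges 3 3 E"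
    by (simp add: sum.distrib sI)
  have "card E = (\<Sum>e\<in>E. 1)" by simp
  also have "\<dots> = (\<Sum>e\<in>E. I 1 2 e + I 1 3 e + I 2 2 e + I 2 3 e + I 3 3 e)"
    using pe' by (intro sum.cong) auto
  finally show "n - 1 = m_edges 1 2 E + m_edges 1 3 E + m_edges 2 2 E + m_edges 2 3 E + m_edges 3 3 E"
    using cE by (simp add: sum.distrib sI)
  have "card V = (\<Sum>v\<in>V. 1)" by simp
  also have "\<dots> = (\<Sum>v\<in>V. (if degree E v = 1 then 1 else 0) + (if degree E v = 2 then 1 else 0)
      + (if degree E v = 3 then 1 else (0::nat)))"
    using vert_facts[OF cg n] by (intro sum.cong) auto
  finally show "n = card {v\<in>V. degree E v = 1} + card {v\<in>V. degree E v = 2} + card {v\<in>V. degree E v = 3}"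
    using cV by (simp add: sum.distrib sum_ind[OF fV])
qed




lemma path_E_alt: "path_E n = (\<lambda>i. {i, Suc i}) ` {0..<n-1}"
  unfolding path_E_def by auto

lemma path_sg: "simple_graph (path_V n) (path_E n)"
  unfolding simple_graph_def path_V_def path_E_def
proof (intro conjI ballI)
  show "finite {0..<n}" by simp
  fix e assume "e \<in> {{i, Suc i} |i. Suc i < n}"
  then obtain i where "e = {i, Suc i}" "Suc i < n" by blast
  then show "\<exists>u v. u \<in> {0..<n} \<and> v \<in> {0..<n} \<and> u \<noteq> v \<and> e = {u, v}"
    by (intro exI[of _ i] exI[of _ "Suc i"]) simp
qed

lemma path_E_mem: "Suc i < n \<Longrightarrow> {i, Suc i} \<in> path_E n"
  unfolding path_E_def by blast

lemma path_conn: "connected_graph (path_V n) (path_E n)"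
proof -
  let ?R = "adjR (path_E n)"
  have a: "(0,i) \<in> ?R\<^sup>* \<and> (i,0) \<in> ?R\<^sup>*" if "i < n" for i
    using that
  proof (induction i)
    case 0 then show ?case by simp
  next
    case (Suc i)
    have m: "{i, Suc i} \<in> path_E n" using path_E_mem Suc.prems by blast
    have e1: "(i, Suc i) \<in> ?R" using m by (simp add: adjR_iff)
    have e2: "(Suc i, i) \<in> ?R" using m by (simp add: adjR_iff insert_commute)
    have IH: "(0,i) \<in> ?R\<^sup>*" "(i,0) \<in> ?R\<^sup>*" using Suc by simp_all
    show ?case using rtrancl_into_rtrancl[OF IH(1) e1] converse_rtrancl_into_rtrancl[OF e2 IH(2)] by simp
  qed
  have "(u,v) \<in> ?R\<^sup>*" if "u \<in> {0..<n}" "v \<in> {0..<n}" for u v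
  proof -
    have "(u,0) \<in> ?R\<^sup>*" "(0,v) \<in> ?R\<^sup>*" using a that by simp_all
    then show ?thesis by (rule rtrancl_trans)
  qed
  then show ?thesis unfolding connected_graph_def path_V_def adjR_def by blast
qed

lemma path_card_E: "card (path_E n) = n - 1"
proof -
  have "inj_on (\<lambda>i. {i, Suc i}) {0..<n-1}"
    by (auto simp: inj_on_def doubleton_eq_iff)
  then show ?thesis unfolding path_E_alt by (simp add: card_image)
qed

lemma path_deg: "degree (path_E n) i \<le> 2"
proof -
  have "{e\<in>path_E n. i \<in> e} \<subseteq> {{i - 1, i}, {i, Suc i}}"
    unfolding path_E_def by auto
  then have "degree (path_E n) i \<le> card {{i - 1, i}, {i, Suc i}}" unfolding degree_def
    by (simp add: card_mono)
  also have "\<dots> \<le> 2" by (simp add: card_insert_if)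
  finally show ?thesis .
qed

lemma path_chem: "chem_graph n (n - 1) (path_V n) (path_E n)"
  unfolding chem_graph_def
proof (intro conjI ballI)
  show "simple_graph (path_V n) (path_E n)" by (rule path_sg)
  show "connected_graph (path_V n) (path_E n)" by (rule path_conn)
  show "card (path_V n) = n" by (simp add: path_V_def)
  show "card (path_E n) = n - 1" by (rule path_card_E)
  fix v show "degree (path_E n) v \<le> 3" using path_deg[of n v] by simp
qed

lemma nbr_card:
  assumes sg: "simple_graph V E"
  shows "card {x. {w,x} \<in> E} \<le> degree E w"
proof -
  have "inj_on (\<lambda>x. {w,x}) {x. {w,x} \<in> E}" by (auto simp: inj_on_def doubleton_eq_iff)
  moreover have "(\<lambda>x. {w,x}) ` {x. {w,x} \<in> E} \<subseteq> {e\<in>E. w \<in> e}" by auto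
  moreover have "finite {e\<in>E. w \<in> e}" using sg_finE[OF sg] by simp
  ultimately show ?thesis unfolding degree_def using card_inj_on_le by blast
qed

lemma nbr_fin: "simple_graph V E \<Longrightarrow> finite {x. {w,x} \<in> E}"
  using sg_adj sg_finV by (metis (no_types, lifting) finite_subset mem_Collect_eq subsetI)

lemma path_iso:
  assumes sg: "simple_graph V E" and c: "connected_graph V E" and cV: "card V = n"
    and d2: "\<forall>v\<in>V. degree E v \<le> 2" and r: "r \<in> V" and dr: "degree E r = 1"
  shows "graph_iso V E (path_V n) (path_E n)"
proof -
  define f where "f = gdist E {r}"
  have S: "{r} \<subseteq> V" "{r} \<noteq> {}" using r by auto
  have fV: "finite V" using sg_finV[OF sg] .
  have fr: "f r = 0" unfolding f_def by (simp add: gdist_zero)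
  have f0: "v = r" if "v \<in> V" "f v = 0" for v using gdist_nz[OF c S that(1)] that(2) f_def by auto
  have par: "\<exists>w. {w,v} \<in> E \<and> Suc (f w) = f v" if "v \<in> V" "v \<noteq> r" for v
    using gdist_parent[OF c S that(1)] that(2) f_def by auto
  have stp: "f v \<le> Suc (f u)" if "u \<in> V" "{u,v} \<in> E" for u v
    using gdist_step[OF c S that] f_def by simp
  have inV: "x \<in> V \<and> y \<in> V \<and> x \<noteq> y" if "{x,y} \<in> E" for x y using sg_adj[OF sg that] .
  define L where "L k = {v\<in>V. f v = k}" for k
  have fL: "finite (L k)" for k unfolding L_def using fV by simp
  have layer: "card (L k) \<le> 1" for k
  proof (induction k)
    case 0
    have "L 0 \<subseteq> {r}" unfolding L_def using f0 by auto
    then show ?case by (metis card.empty card.insert card_mono empty_iff finite.intros One_nat_def)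
  next
    case (Suc k)
    show ?case
    proof (cases "L k = {}")
      case True
      have "L (Suc k) = {}"
      proof (rule ccontr)
        assume "L (Suc k) \<noteq> {}"
        then obtain v where v: "v \<in> V" "f v = Suc k" unfolding L_def by auto
        then have "v \<noteq> r" using fr by auto
        then obtain w where "{w,v} \<in> E" "Suc (f w) = f v" using par v by blast
        then have "w \<in> L k" unfolding L_def using inV v by auto
        then show False using True by simp
      qed
      then show ?thesis by simp
    next
      case False
      have "card (L k) \<noteq> 0" using False fL[of k] by simp
      then have "card (L k) = 1" using Suc.IH by simp
      then obtain w where Lk: "L k = {w}" by (rule card_1_singletonE)
      then have w: "w \<in> V" "f w = k" unfolding L_def by auto
      have sub: "L (Suc k) \<subseteq> {x. {w,x} \<in> E}"
      proof
        fix v assume "v \<in> L (Suc k)"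
        then have v: "v \<in> V" "f v = Suc k" unfolding L_def by auto
        then have "v \<noteq> r" using fr by auto
        then obtain w' where w': "{w',v} \<in> E" "Suc (f w') = f v" using par v by blast
        then have "w' \<in> L k" unfolding L_def using inV v by auto
        then have "w' = w" using Lk by simp
        then show "v \<in> {x. {w,x} \<in> E}" using w' by simp
      qed
      show ?thesis
      proof (cases k)
        case 0
        then have "w = r" using w f0 by auto
        then show ?thesis using sub nbr_card[OF sg, of r] dr nbr_fin[OF sg, of r] card_mono
          by (metis le_trans)
      next
        case (Suc j)
        then have "w \<noteq> r" using w fr by auto
        then obtain q where q: "{q,w} \<in> E" "Suc (f q) = f w" using par w by blast
        have qn: "q \<in> {x. {w,x} \<in> E}" using q by (simp add: insert_commute)
        have "q \<notin> L (Suc k)" unfolding L_def using q w by auto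
        then have "L (Suc k) \<subseteq> {x. {w,x} \<in> E} - {q}" using sub by auto
        then have "card (L (Suc k)) \<le> card ({x. {w,x} \<in> E} - {q})"
          using nbr_fin[OF sg, of w] by (simp add: card_mono)
        also have "\<dots> = card {x. {w,x} \<in> E} - 1" using qn nbr_fin[OF sg, of w] by simp
        also have "\<dots> \<le> 1"
        proof -
          have "degree E w \<le> 2" using d2 w(1) by blast
          then show ?thesis using nbr_card[OF sg, of w] by linarith
        qed
        finally show ?thesis .
      qed
    qed
  qed
  have inj: "inj_on f V"
  proof (rule inj_onI)
    fix u v assume uv: "u \<in> V" "v \<in> V" "f u = f v"
    then have "u \<in> L (f u)" "v \<in> L (f u)" unfolding L_def by auto
    then show "u = v" using layer[of "f u"] fL[of "f u"] by (metis card_le_Suc0_iff_eq One_nat_def)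
  qed
  have down: "\<forall>v\<in>V. f v = m \<longrightarrow> (\<forall>k\<le>m. \<exists>u\<in>V. f u = k)" for m
  proof (induction m)
    case 0 then show ?case by auto
  next
    case (Suc m)
    show ?case
    proof (intro ballI impI allI)
      fix v k assume v: "v \<in> V" "f v = Suc m" and k: "k \<le> Suc m"
      show "\<exists>u\<in>V. f u = k"
      proof (cases "k = Suc m")
        case True then show ?thesis using v by blast
      next
        case False
        have "v \<noteq> r" using v fr by auto
        then obtain w where "{w,v} \<in> E" "Suc (f w) = f v" using par v by blast
        then have "w \<in> V" "f w = m" using inV v by auto
        then show ?thesis using Suc.IH False k by auto
      qed
    qed
  qed
  have img: "f ` V = {0..<n}"
  proof -
    have "f ` V \<subseteq> {0..<n}"
    proof
      fix y assume "y \<in> f ` V"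
      then obtain v where v: "v \<in> V" "f v = y" by blast
      show "y \<in> {0..<n}"
      proof (rule ccontr)
        assume "y \<notin> {0..<n}"
        then have "{0..y} \<subseteq> f ` V" using down v by fastforce
        then have "card {0..y} \<le> card (f ` V)" using fV by (intro card_mono) simp_all
        moreover have "card (f ` V) \<le> n" using cV fV card_image_le by blast
        ultimately show False using \<open>y \<notin> {0..<n}\<close> by simp
      qed
    qed
    moreover have "card (f ` V) = n" using inj cV by (simp add: card_image)
    ultimately show ?thesis by (simp add: card_subset_eq)
  qed
  have bij: "bij_betw f V (path_V n)" unfolding bij_betw_def path_V_def using inj img by simp
  have edges: "{u,v} \<in> E \<longleftrightarrow> {f u, f v} \<in> path_E n" if uv: "u \<in> V" "v \<in> V" for u v
  proof
    assume e: "{u,v} \<in> E"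
    then have "u \<noteq> v" using inV by blast
    then have ne: "f u \<noteq> f v" using inj uv by (meson inj_on_eq_iff)
    have "f v \<le> Suc (f u)" using stp uv e by blast
    moreover have "f u \<le> Suc (f v)" using stp uv e by (simp add: insert_commute)
    moreover have "f u < n" "f v < n" using img uv by auto
    ultimately show "{f u, f v} \<in> path_E n" using ne unfolding path_E_def
      by (cases "f u < f v") (auto simp: insert_commute intro!: exI[of _ "min (f u) (f v)"])
  next
    assume "{f u, f v} \<in> path_E n"
    then obtain i where i: "{f u, f v} = {i, Suc i}" "Suc i < n" unfolding path_E_def by blast
    have key: "{a,b} \<in> E" if ab: "a \<in> V" "b \<in> V" "f a = i" "f b = Suc i" for a b
    proof -
      have "b \<noteq> r" using ab fr by auto
      then obtain w where w: "{w,b} \<in> E" "Suc (f w) = f b" using par ab by blast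
      then have "w \<in> V" "f w = f a" using inV ab by auto
      then have "w = a" using inj ab by (meson inj_on_eq_iff)
      then show ?thesis using w by simp
    qed
    from i(1) have "(f u = i \<and> f v = Suc i) \<or> (f u = Suc i \<and> f v = i)" by (auto simp: doubleton_eq_iff)
    then show "{u,v} \<in> E" using key uv by (metis insert_commute)
  qed
  show ?thesis unfolding graph_iso_def using bij edges by blast
qed




lemma tree_index:
  assumes cg: "chem_graph n (n-1) V E" and n: "n \<ge> 3"
  shows "top_index c12 c13 c22 c23 c33 E = c22 * (real n + 5) - 6 * c23
     + (c12 - 4*c22 + 3*c23) * real (m_edges 1 2 E) + (c13 - 3*c22 + 2*c23) * real (m_edges 1 3 E)
     + (c22 - 2*c23 + c33) * real (m_edges 3 3 E)"
    "card {v\<in>V. degree E v = 3} + 2 = m_edges 1 2 E + m_edges 1 3 E"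
proof -
  note t = tree_counts[OF cg n]
  have h22: "real (m_edges 2 2 E) = real n + 5 - 4 * real (m_edges 1 2 E) - 3 * real (m_edges 1 3 E) + real (m_edges 3 3 E)"
    using t n by linarith
  have h23: "real (m_edges 2 3 E) = 3 * real (m_edges 1 2 E) + 2 * real (m_edges 1 3 E) - 6 - 2 * real (m_edges 3 3 E)"
    using t n by linarith
  show "top_index c12 c13 c22 c23 c33 E = c22 * (real n + 5) - 6 * c23
     + (c12 - 4*c22 + 3*c23) * real (m_edges 1 2 E) + (c13 - 3*c22 + 2*c23) * real (m_edges 1 3 E)
     + (c22 - 2*c23 + c33) * real (m_edges 3 3 E)"
    unfolding top_index_def h22 h23 by (simp add: algebra_simps)
  show "card {v\<in>V. degree E v = 3} + 2 = m_edges 1 2 E + m_edges 1 3 E" using t n by linarith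
qed

lemma m33_forest:
  assumes cg: "chem_graph n (n-1) V E" and n: "n \<ge> 3" and pos: "card {v\<in>V. degree E v = 3} > 0"
  shows "m_edges 3 3 E + 1 \<le> card {v\<in>V. degree E v = 3}"
proof -
  have sg: "simple_graph V E" and c: "connected_graph V E" and cV: "card V = n" and cE: "card E = n - 1"
    using cg unfolding chem_graph_def by auto
  let ?S = "{v\<in>V. degree E v = 3}"
  have S1: "?S \<subseteq> V" by blast
  have S2: "?S \<noteq> {}"
  proof
    assume h: "?S = {}"
    have "card ?S = 0" unfolding h by (rule card.empty)
    then show False using pos by linarith
  qed
  note S = S1 S2
  have eq: "{e\<in>E. etyp E 3 3 e} = {e\<in>E. e \<subseteq> ?S}"
  proof (intro Collect_cong conj_cong refl)
    fix e assume "e \<in> E"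
    then obtain u v where uv: "u \<in> V" "v \<in> V" "u \<noteq> v" "e = {u,v}" using sg_edge[OF sg] by blast
    show "etyp E 3 3 e \<longleftrightarrow> e \<subseteq> ?S" using uv by (auto simp: etyp_iff doubleton_eq_iff)
  qed
  have "m_edges 3 3 E \<le> card ?S - 1"
    unfolding m_edges_alt eq using tree_forest[OF sg c S] cV cE by simp
  then show ?thesis using pos by linarith
qed




theorem theorem1:
  fixes n :: nat and c12 c13 c22 c23 c33 :: real
  assumes "n \<ge> 3"
    and "c13 - 3*c22 + 2*c23 < c12 - 4*c22 + 3*c23"
    and "c12 - 4*c22 + 3*c23 < - (c22 - 2*c23 + c33)"
    and "- (c22 - 2*c23 + c33) < 0"
  shows "chem_graph n (n - 1) (path_V n) (path_E n) \<and>
    (\<forall>(V :: 'a set) E. chem_graph n (n - 1) V E \<longrightarrow>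
        top_index c12 c13 c22 c23 c33 E \<le> top_index c12 c13 c22 c23 c33 (path_E n) \<and>
        (top_index c12 c13 c22 c23 c33 E = top_index c12 c13 c22 c23 c33 (path_E n)
           \<longrightarrow> graph_iso V E (path_V n) (path_E n)))"
proof -
  define a where "a = c12 - 4*c22 + 3*c23"
  define b where "b = c13 - 3*c22 + 2*c23"
  define c where "c = c22 - 2*c23 + c33"
  define K where "K = c22 * (real n + 5) - 6 * c23"
  have ab: "b < a" and ac: "a < - c" and c0: "0 < c" using assms unfolding a_def b_def c_def by auto
  have n: "n \<ge> 3" using assms by simp
  have P: "chem_graph n (n - 1) (path_V n) (path_E n)" by (rule path_chem)
  have P3: "{v\<in>path_V n. degree (path_E n) v = 3} = {}"
  proof -
    have "degree (path_E n) v \<noteq> 3" for v using path_deg[of n v] by simp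
    then show ?thesis by simp
  qed
  have IP: "top_index c12 c13 c22 c23 c33 (path_E n) = K + 2 * a"
  proof -
    note ti = tree_index(1)[OF P n, of c12 c13 c22 c23 c33] tree_index(2)[OF P n]
    note tc = tree_counts[OF P n]
    have z: "card {v\<in>path_V n. degree (path_E n) v = 3} = 0" unfolding P3 by (rule card.empty)
    have "m_edges 1 3 (path_E n) = 0" using tc(3) z by linarith
    moreover have "m_edges 3 3 (path_E n) = 0" using tc(3) z by linarith
    moreover have "m_edges 1 2 (path_E n) = 2" using tc(3) ti(2) z by linarith
    ultimately
    show ?thesis using ti(1) unfolding K_def a_def b_def c_def by simp
  qed
  have G: "top_index c12 c13 c22 c23 c33 E \<le> top_index c12 c13 c22 c23 c33 (path_E n) \<and>
        (top_index c12 c13 c22 c23 c33 E = top_index c12 c13 c22 c23 c33 (path_E n)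
           \<longrightarrow> graph_iso V E (path_V n) (path_E n))" if cg: "chem_graph n (n - 1) V E" for V :: "'a set" and E
  proof -
    note ti = tree_index(1)[OF cg n, of c12 c13 c22 c23 c33] tree_index(2)[OF cg n]
    note tc = tree_counts[OF cg n]
    have IG: "top_index c12 c13 c22 c23 c33 E = K + a * real (m_edges 1 2 E) + b * real (m_edges 1 3 E)
        + c * real (m_edges 3 3 E)" using ti(1) unfolding K_def a_def b_def c_def by simp
    show ?thesis
    proof (cases "card {v\<in>V. degree E v = 3} = 0")
      case True
      have m1: "m_edges 1 3 E = 0" using tc(3) True by linarith
      have m2: "m_edges 3 3 E = 0" using tc(3) True by linarith
      have m3: "m_edges 1 2 E = 2" using tc(3) ti(2) True by linarith
      note m = m1 m2 m3
      have eq: "top_index c12 c13 c22 c23 c33 E = top_index c12 c13 c22 c23 c33 (path_E n)"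
        using IG IP m by simp
      have sg: "simple_graph V E" and cc: "connected_graph V E" and cV: "card V = n"
        using cg unfolding chem_graph_def by auto
      have fV: "finite V" using sg_finV[OF sg] .
      have fin: "finite {v\<in>V. degree E v = 3}" using fV by simp
      have no3: "{v\<in>V. degree E v = 3} = {}" using card_eq_0_iff[of "{v\<in>V. degree E v = 3}"] True fin by blast
      have d2: "\<forall>v\<in>V. degree E v \<le> 2"
      proof
        fix v assume v: "v \<in> V"
        have "degree E v \<noteq> 3"
        proof
          assume "degree E v = 3"
          then have "v \<in> {v\<in>V. degree E v = 3}" using v by simp
          then show False using no3 by blast
        qed
        then show "degree E v \<le> 2" using vert_facts[OF cg n v] by auto
      qed
      have c1: "card {v\<in>V. degree E v = 1} = 2" using tc(1) m by simp
      have "{v\<in>V. degree E v = 1} \<noteq> {}"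
      proof
        assume h: "{v\<in>V. degree E v = 1} = {}"
        have "card {v\<in>V. degree E v = 1} = 0" unfolding h by (rule card.empty)
        then show False using c1 by simp
      qed
      then obtain r where r: "r \<in> V" "degree E r = 1" by blast
      show ?thesis using eq path_iso[OF sg cc cV d2 r] by simp
    next
      case False
      define T where "T = real (card {v\<in>V. degree E v = 3})"
      define X where "X = real (m_edges 1 2 E)"
      define Y where "Y = real (m_edges 1 3 E)"
      define Z where "Z = real (m_edges 3 3 E)"
      have pos: "card {v\<in>V. degree E v = 3} > 0" using False by simp
      have T1: "T \<ge> 1" using pos unfolding T_def by simp
      have XYn: "real (card {v\<in>V. degree E v = 3} + 2) = real (m_edges 1 2 E + m_edges 1 3 E)"
        by (simp only: ti(2))
      have XY: "X + Y = T + 2" using XYn unfolding X_def Y_def T_def by simp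
      have ZTn: "m_edges 3 3 E + 1 \<le> card {v\<in>V. degree E v = 3}" by (rule m33_forest[OF cg n pos])
      have "real (m_edges 3 3 E + 1) \<le> real (card {v\<in>V. degree E v = 3})" by (simp only: of_nat_le_iff ZTn)
      then have ZT: "Z + 1 \<le> T" unfolding Z_def T_def by simp
      have Y0: "Y \<ge> 0" unfolding Y_def by simp
      have f1: "b * Y \<le> a * Y" using ab Y0 by (simp add: mult_right_mono)
      have f2': "c * Z \<le> c * (T - 1)" using c0 ZT by (intro mult_left_mono) simp_all
      have f2: "c * Z \<le> c * T - c" using f2' by (simp add: algebra_simps)
      have XX: "X = T + 2 - Y" using XY by linarith
      have f3: "a * X = a * T + 2 * a - a * Y" unfolding XX by (simp add: algebra_simps)
      have f4': "(a + c) * (T - 1) \<le> 0" using ac T1 by (intro mult_nonpos_nonneg) simp_all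
      have f4: "a * T + c * T - a - c \<le> 0" using f4' by (simp add: algebra_simps)
      have "a * X + b * Y + c * Z < 2 * a"
        using f1 f2 f3 f4 ac c0 by linarith
      then have "top_index c12 c13 c22 c23 c33 E < top_index c12 c13 c22 c23 c33 (path_E n)"
        using IG IP unfolding X_def Y_def Z_def by simp
      then show ?thesis by simp
    qed
  qed
  show ?thesis using P G by blast
qed


end
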